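(* Let $p$ be the characteristic of $\mathbb{F}_q$, $t\ge1$, $m=p^t$, and let $v_1,v_2\in\mathcal{R}=\mathbb{F}_q[x]/(x^{p^t}-1)$ with $\gcd(v_1v_2-1,x^{p^t}-1)=1$. Let $r_1,r_2$ be integers with $0<r_1<r_2<\frac{p^t-1}{2}$, and let $\mathcal{C}$ be the QC code of length $2p^t$ generated by $((x-1)^{r_1},v_1(x-1)^{r_1})$ and $(v_2(x-1)^{r_2},(x-1)^{r_2})$. Then $\mathcal{C}^{\perp_E}$ is the QC code generated by $((x-1)^{p^t-r_1},-\overline{v_2}(x-1)^{p^t-r_1})$ and $(-\overline{v_1}(x-1)^{p^t-r_2},(x-1)^{p^t-r_2})$, and $\mathcal{C}^{\perp_E}\subseteq\mathcal{C}$.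
   Context: Elements of $\mathcal{R}$ are identified with representatives of degree $<m$; $[k]=(k_0,\dots,k_{m-1})$; $\overline{k}(x)=k(x^{-1})\bmod(x^m-1)$. The QC code generated by $(u_{i1},u_{i2})$, $i=1,2$, is $\{([r_1u_{11}+r_2u_{21}],[r_1u_{12}+r_2u_{22}]):r_i\in\mathcal{R}\}\subseteq\mathbb{F}_q^{2m}$. $\mathcal{C}^{\perp_E}$ is the dual with respect to $\langle u,v\rangle_E=\sum u_iv_i$. *)

theory Defs
  imports "HOL-Computational_Algebra.Computational_Algebra"
begin

definition xm1 :: "nat \<Rightarrow> 'a::field poly" where
  "xm1 m = monom 1 m - 1"

definition cvec :: "nat \<Rightarrow> 'a::field poly \<Rightarrow> 'a list" where
  "cvec m k = map (\<lambda>i. coeff (k mod xm1 m) i) [0..<m]"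

text \<open>conjugate: k(x^{-1}) mod (x^m - 1), using x^{-1} = x^{m-1} in R.\<close>
definition pconj :: "nat \<Rightarrow> 'a::field poly \<Rightarrow> 'a poly" where
  "pconj m k = (\<Sum>i<m. monom (coeff (k mod xm1 m) i) ((m - i) mod m)) mod xm1 m"

definition qc_code :: "nat \<Rightarrow> 'a::field poly \<Rightarrow> 'a poly \<Rightarrow> 'a poly \<Rightarrow> 'a poly \<Rightarrow> 'a list set" where
  "qc_code m u11 u12 u21 u22 =
     {cvec m (r1 * u11 + r2 * u21) @ cvec m (r1 * u12 + r2 * u22) | r1 r2. True}"

definition euclid_ip :: "'a::field list \<Rightarrow> 'a list \<Rightarrow> 'a" where
  "euclid_ip u v = (\<Sum>i<length u. u ! i * v ! i)"

definition euclid_dual :: "nat \<Rightarrow> 'a::field list set \<Rightarrow> 'a list set" where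
  "euclid_dual n C = {v. length v = n \<and> (\<forall>c\<in>C. euclid_ip c v = 0)}"

end

theory Submission
  imports Defs "HOL-Number_Theory.Cong"
begin


lemma degree_xm1: "m > 0 \<Longrightarrow> degree (xm1 m :: 'a::field poly) = m"
proof -
  assume m: "m > 0"
  have "degree (- 1 :: 'a poly) < degree (monom (1::'a) m)" using m by (simp add: degree_monom_eq)
  then have "degree (monom (1::'a) m + - 1) = m" by (subst degree_add_eq_left) (simp_all add: degree_monom_eq)
  then show ?thesis unfolding xm1_def by simp
qed
  
lemma xm1_nz: "m > 0 \<Longrightarrow> xm1 m \<noteq> (0 :: 'a::field poly)"
proof
  assume "m > 0" "xm1 m = (0 :: 'a poly)"
  then show False using degree_xm1[of m, where 'a='a] by simp
qed

lemma mod_small: "m > 0 \<Longrightarrow> degree (a::'a::field poly) < m \<Longrightarrow> a mod xm1 m = a"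
  by (metis degree_xm1 degree_0 mod_poly_less gr_implies_not0 )

lemma monom_mod: assumes "m > 0" shows "monom c n mod xm1 m = monom (c::'a::field) (n mod m) mod xm1 m"
proof -
  have e: "monom 1 m mod xm1 m = (1::'a poly) mod xm1 m"
    by (simp add: xm1_def mod_eq_dvd_iff)
  have "monom c n = monom c (n mod m) * monom 1 m ^ (n div m)"
    by (simp add: mult_monom monom_power)
  then have "monom c n mod xm1 m = (monom c (n mod m) * ((monom 1 m mod xm1 m) ^ (n div m) mod xm1 m)) mod xm1 m"
    by (metis mod_mult_right_eq power_mod)
  also have "\<dots> = monom c (n mod m) mod xm1 m" unfolding e
    by (metis mod_mult_right_eq mult.right_neutral power_mod power_one)
  finally show ?thesis .
qed

lemma monom_mod': assumes "m > 0" shows "monom c n mod xm1 m = monom (c::'a::field) (n mod m)"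
  using monom_mod[OF assms] mod_small[OF assms] degree_monom_le
  by (metis assms le_less_trans mod_less_divisor)

definition cj :: "nat \<Rightarrow> 'a::field poly \<Rightarrow> 'a poly" where
  "cj m b = pcompose b (monom 1 (m - 1))"

lemma pcompose_monom: "pcompose (monom d j) q = smult d (q ^ j)"
  by (induction j) (auto simp: monom_Suc pcompose_pCons monom_0)

lemma pcompose_cong:
  assumes "A mod X = B mod X" shows "pcompose f A mod X = pcompose f (B::'a::field poly) mod X"
proof (induction f)
  case 0 then show ?case by simp
next
  case (pCons a f)
  then show ?case unfolding pcompose_pCons
    by (metis assms mod_add_cong mod_mult_cong)
qed

lemma cj_add: "cj m (a + b) = cj m a + cj m b" by (simp add: cj_def pcompose_add)
lemma cj_diff: "cj m (a - b) = cj m a - cj m b" by (simp add: cj_def pcompose_diff)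
lemma cj_uminus: "cj m (- a) = - cj m a" by (simp add: cj_def pcompose_uminus)
lemma cj_mult: "cj m (a * b) = cj m a * cj m b" by (simp add: cj_def pcompose_mult)
lemma cj_power: "cj m (a ^ k) = cj m a ^ k" by (induction k) (simp_all add: cj_def pcompose_1 pcompose_mult)
lemma cj_monom: "cj m (monom c i) = monom c (i * (m - 1))"
  by (simp add: cj_def pcompose_monom monom_power smult_monom mult.commute)

lemma cj_X: assumes "m > 0" shows "cj m (xm1 m :: 'a::field poly) mod xm1 m = 0"
proof -
  have "cj m (xm1 m :: 'a poly) = monom 1 (m * (m - 1)) - 1"
    unfolding xm1_def cj_diff cj_monom by (simp add: cj_def pcompose_1)
  moreover have "(monom 1 (m * (m - 1)) - 1 :: 'a poly) mod xm1 m = 0"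
    using assms by (simp add: poly_mod_diff_left monom_mod' mod_small)
  ultimately show ?thesis by simp
qed

lemma cj_cong: assumes "m > 0" "a mod xm1 m = b mod xm1 m"
  shows "cj m a mod xm1 m = cj m (b :: 'a::field poly) mod xm1 m"
proof -
  have "xm1 m dvd (a - b)" using assms(2) by (simp add: mod_eq_dvd_iff)
  then obtain k where "a - b = xm1 m * k" by blast
  then have "cj m a - cj m b = cj m (xm1 m) * cj m k" by (metis cj_diff cj_mult)
  moreover have "xm1 m dvd cj m (xm1 m :: 'a poly)" using cj_X[OF assms(1), where 'a='a] by (simp add: dvd_eq_mod_eq_0)
  ultimately have "xm1 m dvd (cj m a - cj m b)" by simp
  then show ?thesis by (simp add: mod_eq_dvd_iff)
qed

lemma cj_cj: assumes "m > 1" shows "cj m (cj m a) mod xm1 m = (a :: 'a::field poly) mod xm1 m"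
proof -
  have e: "(m - 1) * (m - 1) mod m = 1" using assms
  proof -
    obtain k where "m = Suc (Suc k)" using assms by (metis Suc_diff_Suc Suc_pred diff_0_eq_0 less_imp_Suc_add not_gr_zero plus_1_eq_Suc)
    then have "(m - 1) * (m - 1) = 1 + k * m" by (simp add: algebra_simps)
    moreover have "(1 + k * m) mod m = 1 mod m" by (rule mod_mult_self1)
    ultimately show ?thesis using assms by simp
  qed
  have "cj m (cj m a) = pcompose a (monom 1 ((m - 1) * (m - 1)))"
    by (simp add: cj_def pcompose_assoc[symmetric] pcompose_monom monom_power)
  moreover have "monom (1::'a) ((m - 1) * (m - 1)) mod xm1 m = [:0, 1:] mod xm1 m"
  proof -
    have m0: "m > 0" using assms by simp
    have "monom (1::'a) ((m - 1) * (m - 1)) mod xm1 m = monom 1 1"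
      using monom_mod'[OF m0, of "1::'a" "(m - 1) * (m - 1)"] e by simp
    moreover have "[:0, 1:] mod xm1 m = ([:0, 1:] :: 'a poly)"
      using assms by (intro mod_small) auto
    moreover have "monom (1::'a) 1 = [:0, 1:]" by (simp add: monom_Suc)
    ultimately show ?thesis by simp
  qed
  ultimately show ?thesis using pcompose_cong by (metis pcompose_idR)
qed

lemma L_monom: "[:-1, 1:] = (monom 1 1 - 1 :: 'a::field poly)"
proof -
  have "[:-1, 1:] = (monom 1 1 + -1 :: 'a poly)" by (simp add: monom_Suc one_pCons)
  then show ?thesis by simp
qed

lemma cj_L: assumes "m > 0"
  shows "cj m [:-1, 1:] = - monom 1 (m - 1) * [:-1, 1:] + (xm1 m :: 'a::field poly)"
proof -
  have "cj m [:-1, 1:] = (monom 1 (m - 1) - 1 :: 'a poly)"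
    unfolding L_monom cj_diff cj_monom by (simp add: cj_def pcompose_1)
  moreover have "monom (1::'a) (m - 1) * monom 1 1 = monom 1 m"
    using assms by (simp add: mult_monom)
  ultimately show ?thesis unfolding xm1_def L_monom by (simp add: algebra_simps)
qed

lemma L_pow:
  assumes "CHAR('a) = p" "m = p ^ t" "t \<ge> 1" "finite (UNIV :: 'a set)"
  shows "[:-1, 1:] ^ m = (xm1 m :: 'a::field poly)"
proof -
  have pr: "prime CHAR('a poly)" using finite_imp_CHAR_pos[OF assms(4)] prime_CHAR_semidom by simp
  have mp: "m = CHAR('a poly) ^ t" using assms by simp
  have "m > 0" using pr mp prime_gt_0_nat by simp
  have fd: "(x + y :: 'a poly) ^ m = x ^ m + y ^ m" for x y
    by (rule freshmans_dream'[OF pr mp])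
  have "(1 + -1 :: 'a poly) ^ m = 1 + (-1) ^ m" using fd[of 1 "-1"] by simp
  then have m1: "(-1 :: 'a poly) ^ m = -1" using \<open>m > 0\<close> by (simp add: eq_neg_iff_add_eq_0 add.commute zero_power)
  have "[:-1, 1:] = (monom 1 1 + -1 :: 'a poly)" by (simp add: monom_Suc one_pCons)
  then have "[:-1, 1:] ^ m = (monom 1 1 + -1 :: 'a poly) ^ m" by simp
  also have "\<dots> = (monom 1 1) ^ m + (-1 :: 'a poly) ^ m" by (rule fd)
  finally have "[:-1, 1:] ^ m = (monom 1 1) ^ m + (-1 :: 'a poly) ^ m" .
  then show ?thesis by (simp add: m1 monom_power xm1_def)
qed




lemma num_aux: assumes "(m::nat) > 0" shows "(i + j * (m - 1)) mod m = 0 \<longleftrightarrow> i mod m = j mod m"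
proof -
  have e: "int (i + j * (m - 1)) = (int i - int j) + int j * int m" using assms by (cases m) (simp_all add: algebra_simps)
  have "(i + j * (m - 1)) mod m = 0 \<longleftrightarrow> int m dvd int (i + j * (m - 1))" by (metis dvd_eq_mod_eq_0 int_dvd_int_iff)
  also have "\<dots> \<longleftrightarrow> int m dvd (int i - int j)" unfolding e by (simp add: dvd_add_left_iff)
  also have "\<dots> \<longleftrightarrow> int i mod int m = int j mod int m" by (simp add: mod_eq_dvd_iff)
  also have "\<dots> \<longleftrightarrow> i mod m = j mod m" by (metis of_nat_eq_iff of_nat_mod)
  finally show ?thesis .
qed

lemma additive_sum:
  fixes F :: "'b::ab_group_add \<Rightarrow> 'c::ab_group_add"
  assumes "\<And>x y. F (x + y) = F x + F y"
  shows "F (sum g A) = (\<Sum>a\<in>A. F (g a))"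
proof -
  have z: "F 0 = 0" using assms[of 0 0] by simp
  show ?thesis by (induction A rule: infinite_finite_induct) (simp_all add: z assms)
qed

lemma sum_split: "(\<Sum>i<a+(b::nat). f i) = (\<Sum>i<a. f i) + (\<Sum>i<b. f (i + a))"
  by (induction b) (simp_all add: add_ac)

definition sdot :: "nat \<Rightarrow> 'a::field poly \<Rightarrow> 'a poly \<Rightarrow> 'a" where
  "sdot m a b = (\<Sum>i<m. coeff (a mod xm1 m) i * coeff (b mod xm1 m) i)"

lemma length_cvec[simp]: "length (cvec m a) = m" by (simp add: cvec_def)
lemma nth_cvec: "i < m \<Longrightarrow> cvec m a ! i = coeff (a mod xm1 m) i" by (simp add: cvec_def)

lemma ip_app: "euclid_ip (cvec m a1 @ cvec m a2) (cvec m b1 @ cvec m b2) = sdot m a1 b1 + sdot m a2 b2"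
proof -
  have "euclid_ip (cvec m a1 @ cvec m a2) (cvec m b1 @ cvec m b2) =
     (\<Sum>i<m + m. (cvec m a1 @ cvec m a2) ! i * (cvec m b1 @ cvec m b2) ! i)"
    by (simp add: euclid_ip_def)
  also have "\<dots> = (\<Sum>i<m. (cvec m a1 @ cvec m a2) ! i * (cvec m b1 @ cvec m b2) ! i)
      + (\<Sum>i<m. (cvec m a1 @ cvec m a2) ! (i + m) * (cvec m b1 @ cvec m b2) ! (i + m))"
    by (rule sum_split)
  also have "\<dots> = sdot m a1 b1 + sdot m a2 b2"
    by (simp add: sdot_def nth_append nth_cvec)
  finally show ?thesis .
qed

lemma sdot_add1: "sdot m (a1 + a2) b = sdot m a1 b + sdot m a2 b"
  by (simp add: sdot_def poly_mod_add_left algebra_simps sum.distrib)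
lemma sdot_add2: "sdot m a (b1 + b2) = sdot m a b1 + sdot m a b2"
  by (simp add: sdot_def poly_mod_add_left algebra_simps sum.distrib)

definition rdot :: "nat \<Rightarrow> 'a::field poly \<Rightarrow> 'a poly \<Rightarrow> 'a" where
  "rdot m a b = coeff ((a * cj m b) mod xm1 m) 0"

lemma rdot_add1: "rdot m (a1 + a2) b = rdot m a1 b + rdot m a2 b"
  by (simp add: rdot_def poly_mod_add_left algebra_simps)
lemma rdot_add2: "rdot m a (b1 + b2) = rdot m a b1 + rdot m a b2"
  by (simp add: rdot_def cj_add poly_mod_add_left algebra_simps)

lemma sdot_monom: assumes "m > 0"
  shows "sdot m (monom c i) (monom d j) = (if i mod m = j mod m then c * d else 0)"
proof -
  have "sdot m (monom c i) (monom d j) =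
     (\<Sum>k<m. (if k = i mod m then (if i mod m = j mod m then c * d else 0) else 0))"
    unfolding sdot_def monom_mod'[OF assms] by (rule sum.cong) (auto simp: coeff_monom)
  also have "\<dots> = (if i mod m = j mod m then c * d else 0)"
    using assms by (simp add: sum.delta)
  finally show ?thesis .
qed

lemma rdot_monom: assumes "m > 0"
  shows "rdot m (monom c i) (monom d j) = (if i mod m = j mod m then c * d else 0)"
  using assms num_aux[OF assms, of i j] by (auto simp: rdot_def cj_monom mult_monom monom_mod' coeff_monom)

lemma sdot_rdot: assumes "m > 0" shows "sdot m a b = rdot m a b"
proof -
  have "sdot m a b = sdot m (\<Sum>i\<le>degree a. monom (coeff a i) i) (\<Sum>j\<le>degree b. monom (coeff b j) j)"
    by (simp add: poly_as_sum_of_monoms)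
  also have "\<dots> = (\<Sum>i\<le>degree a. \<Sum>j\<le>degree b. sdot m (monom (coeff a i) i) (monom (coeff b j) j))"
    by (simp add: additive_sum[where F = "\<lambda>x. sdot m x _"] additive_sum[where F = "\<lambda>x. sdot m _ x"] sdot_add1 sdot_add2) (rule sum.swap)
  also have "\<dots> = (\<Sum>i\<le>degree a. \<Sum>j\<le>degree b. rdot m (monom (coeff a i) i) (monom (coeff b j) j))"
    using assms by (simp add: sdot_monom rdot_monom)
  also have "\<dots> = rdot m (\<Sum>i\<le>degree a. monom (coeff a i) i) (\<Sum>j\<le>degree b. monom (coeff b j) j)"
    by (simp add: additive_sum[where F = "\<lambda>x. rdot m x _"] additive_sum[where F = "\<lambda>x. rdot m _ x"] rdot_add1 rdot_add2) (rule sum.swap)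
  also have "\<dots> = rdot m a b" by (simp add: poly_as_sum_of_monoms)
  finally show ?thesis .
qed

lemma coeff_via_rdot: assumes "m > 0" "i < m"
  shows "coeff (P mod xm1 m) i = rdot m P (monom 1 i)"
proof -
  have "sdot m P (monom 1 i) = (\<Sum>k<m. if k = i then coeff (P mod xm1 m) i else 0)"
    unfolding sdot_def using assms by (intro sum.cong) (auto simp: monom_mod' coeff_monom)
  also have "\<dots> = coeff (P mod xm1 m) i" using assms by (simp add: sum.delta)
  finally show ?thesis using sdot_rdot[OF assms(1), of P "monom 1 i"] by metis
qed

lemma mod_zeroI: assumes "m > 0" "\<And>i. i < m \<Longrightarrow> rdot m P (monom 1 i) = 0"
  shows "P mod xm1 m = (0::'a::field poly)"
proof (rule poly_eqI)
  fix i
  show "coeff (P mod xm1 m) i = coeff 0 i"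
  proof (cases "i < m")
    case True then show ?thesis using coeff_via_rdot[OF assms(1) True, of P] assms(2)[OF True] by (metis coeff_0)
  next
    case False
    have "degree (P mod xm1 m) < m \<or> P mod xm1 m = 0"
      using degree_mod_less[OF xm1_nz[OF assms(1)], of P] degree_xm1[OF assms(1), where 'a='a] by auto
    then show ?thesis using False by (auto intro: coeff_eq_0)
  qed
qed




lemma cg_cj: "m > 0 \<Longrightarrow> [a = b] (mod xm1 m) \<Longrightarrow> [cj m a = cj m (b::'a::field poly)] (mod xm1 m)"
  unfolding cong_def by (rule cj_cong)

lemma cjL_pow: assumes "m > 0"
  shows "[cj m ([:-1, 1:] ^ k) = (- monom 1 (m - 1)) ^ k * [:-1, 1:] ^ k] (mod xm1 m :: 'a::field poly)"
proof -
  have "[cj m [:-1, 1:] = - monom 1 (m - 1) * ([:-1, 1:] :: 'a poly)] (mod xm1 m)"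
    unfolding cj_L[OF assms] cong_def by simp
  then have "[cj m [:-1, 1:] ^ k = (- monom 1 (m - 1) * ([:-1, 1:] :: 'a poly)) ^ k] (mod xm1 m)"
    by (rule cong_pow)
  then show ?thesis by (simp only: cj_power power_mult_distrib)
qed

lemma num_aux2: assumes "(i::nat) < m" shows "(i * (m - 1)) mod m = (m - i) mod m"
proof -
  have "int (i * (m - 1)) - int (m - i) = (int i - 1) * int m"
    using assms by (simp add: of_nat_diff algebra_simps)
  then have "int m dvd (int (i * (m - 1)) - int (m - i))" by simp
  then have "int (i * (m - 1)) mod int m = int (m - i) mod int m" by (simp add: mod_eq_dvd_iff)
  then show ?thesis by (metis of_nat_eq_iff of_nat_mod)
qed

lemma pconj_cj: assumes "m > 0" shows "[pconj m k = cj m (k::'a::field poly)] (mod xm1 m)"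
proof -
  define k' where "k' = k mod xm1 m"
  have "k' = 0 \<or> degree k' < m"
    using degree_mod_less[OF xm1_nz[OF assms], of k] degree_xm1[OF assms, where 'a='a] unfolding k'_def by simp
  then have "degree k' \<le> m - 1" by auto
  then have "k' = (\<Sum>i\<le>m-1. monom (coeff k' i) i)" by (simp add: poly_as_sum_of_monoms')
  also have "{..m-1} = {..<m}" using assms by auto
  finally have k'eq: "k' = (\<Sum>i<m. monom (coeff k' i) i)" .
  have "cj m k' = (\<Sum>i<m. monom (coeff k' i) (i * (m - 1)))"
    by (subst k'eq) (simp add: additive_sum[where F = "cj m"] cj_add cj_monom)
  moreover have "[cj m k = cj m k'] (mod xm1 m)"
    by (rule cg_cj[OF assms]) (simp add: k'_def cong_def)
  moreover have "[(\<Sum>i<m. monom (coeff k' i) (i * (m - 1))) = (\<Sum>i<m. monom (coeff k' i) ((m - i) mod m))] (mod xm1 m)"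
  proof (rule cong_sum)
    fix i assume "i \<in> {..<m}"
    then show "[monom (coeff k' i) (i * (m - 1)) = monom (coeff k' i) ((m - i) mod m)] (mod xm1 m)"
      unfolding cong_def using monom_mod[OF assms] num_aux2[of i m] by (metis lessThan_iff mod_mod_trivial)
  qed
  moreover have "pconj m k = (\<Sum>i<m. monom (coeff k' i) ((m - i) mod m)) mod xm1 m"
    by (simp add: pconj_def k'_def)
  ultimately show ?thesis unfolding cong_def by (metis mod_mod_trivial)
qed

lemma cj_pconj: assumes "m > 1" shows "[cj m (pconj m v) = (v::'a::field poly)] (mod xm1 m)"
proof -
  have "[cj m (pconj m v) = cj m (cj m v)] (mod xm1 m)"
    using assms by (intro cg_cj pconj_cj) auto
  also have "[cj m (cj m v) = v] (mod xm1 m)" using cj_cj[OF assms] by (simp add: cong_def)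
  finally show ?thesis .
qed

lemma LcjL: assumes "m > 0" "r \<le> m" "[:-1, 1:] ^ m = (xm1 m :: 'a::field poly)"
  shows "xm1 m dvd [:-1, 1:] ^ r * cj m ([:-1, 1:] ^ (m - r) :: 'a poly)"
proof -
  have "[[:-1, 1:] ^ r * cj m ([:-1, 1:] ^ (m - r)) =
         [:-1, 1:] ^ r * ((- monom 1 (m - 1)) ^ (m - r) * [:-1, 1:] ^ (m - r))] (mod xm1 m :: 'a poly)"
    by (intro cong_mult cong_refl cjL_pow assms)
  also have "[:-1, 1:] ^ r * ((- monom 1 (m - 1)) ^ (m - r) * [:-1, 1:] ^ (m - r)) =
       (- monom 1 (m - 1)) ^ (m - r) * ([:-1, 1:] ^ (r + (m - r)) :: 'a poly)"
    by (simp add: power_add algebra_simps)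
  also have "\<dots> = (- monom 1 (m - 1)) ^ (m - r) * xm1 m" using assms by simp
  finally show ?thesis by (simp add: cong_def dvd_eq_mod_eq_0)
qed

lemma cvec_cong: "[a = b] (mod xm1 m) \<Longrightarrow> cvec m a = cvec m b"
  by (simp add: cvec_def cong_def)

lemma qc_memI:
  assumes "[a = r1 * u11 + r2 * u21] (mod xm1 m)" "[b = r1 * u12 + r2 * u22] (mod xm1 m)"
  shows "cvec m a @ cvec m b \<in> qc_code m u11 u12 u21 u22"
proof -
  have "cvec m a @ cvec m b = cvec m (r1 * u11 + r2 * u21) @ cvec m (r1 * u12 + r2 * u22)"
    using cvec_cong[OF assms(1)] cvec_cong[OF assms(2)] by simp
  then show ?thesis unfolding qc_code_def by blast
qed

lemma degree_Poly_less: "xs \<noteq> [] \<Longrightarrow> degree (Poly xs) < length xs"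
proof -
  assume "xs \<noteq> []"
  have "degree (Poly xs) \<le> length xs - 1"
    by (rule degree_le) (auto simp: nth_default_beyond)
  then show ?thesis using \<open>xs \<noteq> []\<close> by (cases xs) auto
qed

lemma cvec_Poly: assumes "m > 0" "length xs = m" shows "cvec m (Poly xs) = (xs :: 'a::field list)"
proof -
  have "Poly xs mod xm1 m = Poly xs"
    using assms degree_Poly_less[of xs] by (intro mod_small) auto
  then show ?thesis using assms
    by (auto simp: cvec_def nth_default_nth intro!: nth_equalityI)
qed

lemma split_vec: assumes "m > 0" "length v = 2 * m"
  shows "v = cvec m (Poly (take m v)) @ cvec m (Poly (drop m (v :: 'a::field list)))"
  using assms by (simp add: cvec_Poly)




lemma D_sub_dual:
  fixes v1 v2 :: "'a::field poly"
  assumes m: "m > 1" and LX: "[:-1, 1:] ^ m = (xm1 m :: 'a poly)" and r: "r1 \<le> m" "r2 \<le> m"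
  shows "qc_code m ([:-1, 1:] ^ (m - r1)) (- pconj m v2 * [:-1, 1:] ^ (m - r1))
                   (- pconj m v1 * [:-1, 1:] ^ (m - r2)) ([:-1, 1:] ^ (m - r2))
         \<subseteq> euclid_dual (2 * m) (qc_code m ([:-1, 1:] ^ r1) (v1 * [:-1, 1:] ^ r1)
                            (v2 * [:-1, 1:] ^ r2) ([:-1, 1:] ^ r2))"
proof
  have m0: "m > 0" using m by simp
  fix d assume "d \<in> qc_code m ([:-1, 1:] ^ (m - r1)) (- pconj m v2 * [:-1, 1:] ^ (m - r1))
                   (- pconj m v1 * [:-1, 1:] ^ (m - r2)) ([:-1, 1:] ^ (m - r2))"
  then obtain R1 R2 where d: "d = cvec m (R1 * [:-1, 1:] ^ (m - r1) + R2 * (- pconj m v1 * [:-1, 1:] ^ (m - r2)))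
      @ cvec m (R1 * (- pconj m v2 * [:-1, 1:] ^ (m - r1)) + R2 * [:-1, 1:] ^ (m - r2))"
    unfolding qc_code_def by blast
  define d1 where "d1 = R1 * [:-1, 1:] ^ (m - r1) + R2 * (- pconj m v1 * [:-1, 1:] ^ (m - r2))"
  define d2 where "d2 = R1 * (- pconj m v2 * [:-1, 1:] ^ (m - r1)) + R2 * [:-1, 1:] ^ (m - r2)"
  have d': "d = cvec m d1 @ cvec m d2" using d d1_def d2_def by simp
  define K1 where "K1 = cj m ([:-1, 1:] ^ (m - r1) :: 'a poly)"
  define K2 where "K2 = cj m ([:-1, 1:] ^ (m - r2) :: 'a poly)"
  define P1 where "P1 = cj m (pconj m v1)"
  define P2 where "P2 = cj m (pconj m v2)"
  have cd1: "cj m d1 = cj m R1 * K1 - cj m R2 * (P1 * K2)"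
    by (simp add: d1_def K1_def K2_def P1_def cj_add cj_diff cj_mult cj_uminus)
  have cd2: "cj m d2 = - (cj m R1 * (P2 * K1)) + cj m R2 * K2"
    by (simp add: d2_def K1_def K2_def P2_def cj_add cj_diff cj_mult cj_uminus)
  have dv1: "xm1 m dvd [:-1, 1:] ^ r1 * K1" unfolding K1_def by (rule LcjL[OF m0 r(1) LX])
  have dv2: "xm1 m dvd [:-1, 1:] ^ r2 * K2" unfolding K2_def by (rule LcjL[OF m0 r(2) LX])
  have dp1: "xm1 m dvd (v1 - P1)" using cj_pconj[OF m, of v1] unfolding P1_def
    by (simp add: cong_iff_dvd_diff dvd_diff_commute)
  have dp2: "xm1 m dvd (v2 - P2)" using cj_pconj[OF m, of v2] unfolding P2_def
    by (simp add: cong_iff_dvd_diff dvd_diff_commute)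
  have "d \<in> euclid_dual (2 * m) (qc_code m ([:-1, 1:] ^ r1) (v1 * [:-1, 1:] ^ r1)
                            (v2 * [:-1, 1:] ^ r2) ([:-1, 1:] ^ r2))"
    unfolding euclid_dual_def
  proof (intro CollectI conjI ballI)
    show "length d = 2 * m" using d' by simp
    fix c assume "c \<in> qc_code m ([:-1, 1:] ^ r1) (v1 * [:-1, 1:] ^ r1) (v2 * [:-1, 1:] ^ r2) ([:-1, 1:] ^ r2)"
    then obtain s1 s2 where c: "c = cvec m (s1 * [:-1, 1:] ^ r1 + s2 * (v2 * [:-1, 1:] ^ r2))
       @ cvec m (s1 * (v1 * [:-1, 1:] ^ r1) + s2 * [:-1, 1:] ^ r2)"
      unfolding qc_code_def by blast
    define c1 where "c1 = s1 * [:-1, 1:] ^ r1 + s2 * (v2 * [:-1, 1:] ^ r2)"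
    define c2 where "c2 = s1 * (v1 * [:-1, 1:] ^ r1) + s2 * [:-1, 1:] ^ r2"
    have "euclid_ip c d = rdot m c1 d1 + rdot m c2 d2"
      unfolding c d' c1_def[symmetric] c2_def[symmetric] ip_app sdot_rdot[OF m0] ..
    also have "\<dots> = coeff ((c1 * cj m d1 + c2 * cj m d2) mod xm1 m) 0"
      by (simp add: rdot_def poly_mod_add_left)
    also have "c1 * cj m d1 + c2 * cj m d2 =
       s1 * cj m R1 * (([:-1, 1:] ^ r1 * K1) * (1 - v1 * P2))
     + s1 * cj m R2 * ((v1 - P1) * ([:-1, 1:] ^ r1 * K2))
     + s2 * cj m R1 * ((v2 - P2) * ([:-1, 1:] ^ r2 * K1))
     + s2 * cj m R2 * (([:-1, 1:] ^ r2 * K2) * (1 - v2 * P1))"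
      unfolding cd1 cd2 c1_def c2_def by algebra
    also have "\<dots> mod xm1 m = 0"
      using dv1 dv2 dp1 dp2 by (simp add: dvd_eq_mod_eq_0[symmetric])
    finally show "euclid_ip c d = 0" by simp
  qed
  then show "d \<in> euclid_dual (2 * m) (qc_code m ([:-1, 1:] ^ r1) (v1 * [:-1, 1:] ^ r1)
                            (v2 * [:-1, 1:] ^ r2) ([:-1, 1:] ^ r2))" .
qed




lemma D_sub_C:
  fixes v1 v2 u :: "'a::field poly"
  assumes m: "m > 1" and u: "[u * (1 - v1 * v2) = 1] (mod xm1 m)"
    and r: "r1 \<le> r2" "2 * r2 \<le> m"
  shows "qc_code m ([:-1, 1:] ^ (m - r1)) (- pconj m v2 * [:-1, 1:] ^ (m - r1))
                   (- pconj m v1 * [:-1, 1:] ^ (m - r2)) ([:-1, 1:] ^ (m - r2))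
         \<subseteq> qc_code m ([:-1, 1:] ^ r1) (v1 * [:-1, 1:] ^ r1) (v2 * [:-1, 1:] ^ r2) ([:-1, 1:] ^ r2)"
proof
  fix d assume "d \<in> qc_code m ([:-1, 1:] ^ (m - r1)) (- pconj m v2 * [:-1, 1:] ^ (m - r1))
                   (- pconj m v1 * [:-1, 1:] ^ (m - r2)) ([:-1, 1:] ^ (m - r2))"
  then obtain R1 R2 where d: "d = cvec m (R1 * [:-1, 1:] ^ (m - r1) + R2 * (- pconj m v1 * [:-1, 1:] ^ (m - r2)))
      @ cvec m (R1 * (- pconj m v2 * [:-1, 1:] ^ (m - r1)) + R2 * [:-1, 1:] ^ (m - r2))"
    unfolding qc_code_def by blast
  define d1 where "d1 = R1 * [:-1, 1:] ^ (m - r1) + R2 * (- pconj m v1 * [:-1, 1:] ^ (m - r2))"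
  define d2 where "d2 = R1 * (- pconj m v2 * [:-1, 1:] ^ (m - r1)) + R2 * [:-1, 1:] ^ (m - r2)"
  have d': "d = cvec m d1 @ cvec m d2" using d d1_def d2_def by simp
  have pw1: "[:-1, 1:] ^ (m - r1) = [:-1, 1:] ^ r2 * ([:-1, 1:] ^ (m - r1 - r2) :: 'a poly)"
    using r by (simp flip: power_add)
  have pw2: "[:-1, 1:] ^ (m - r2) = [:-1, 1:] ^ r2 * ([:-1, 1:] ^ (m - r2 - r2) :: 'a poly)"
    using r by (simp flip: power_add)
  have pw3: "[:-1, 1:] ^ r2 = [:-1, 1:] ^ (r2 - r1) * ([:-1, 1:] ^ r1 :: 'a poly)"
    using r by (simp flip: power_add)
  define f1 where "f1 = R1 * [:-1, 1:] ^ (m - r1 - r2) + R2 * (- pconj m v1 * [:-1, 1:] ^ (m - r2 - r2))"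
  define f2 where "f2 = R1 * (- pconj m v2 * [:-1, 1:] ^ (m - r1 - r2)) + R2 * [:-1, 1:] ^ (m - r2 - r2)"
  have d1f: "d1 = [:-1, 1:] ^ r2 * f1" unfolding d1_def f1_def pw1 pw2 by algebra
  have d2f: "d2 = [:-1, 1:] ^ r2 * f2" unfolding d2_def f2_def pw1 pw2 by algebra
  define s1 where "s1 = u * (f1 - v2 * f2) * [:-1, 1:] ^ (r2 - r1)"
  define s2 where "s2 = u * (f2 - v1 * f1)"
  have e1: "s1 * [:-1, 1:] ^ r1 + s2 * (v2 * [:-1, 1:] ^ r2) = (u * (1 - v1 * v2)) * d1"
    unfolding s1_def s2_def d1f pw3 by algebra
  have e2: "s1 * (v1 * [:-1, 1:] ^ r1) + s2 * [:-1, 1:] ^ r2 = (u * (1 - v1 * v2)) * d2"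
    unfolding s1_def s2_def d2f pw3 by algebra
  have c1: "[d1 = s1 * [:-1, 1:] ^ r1 + s2 * (v2 * [:-1, 1:] ^ r2)] (mod xm1 m)"
    unfolding e1 using cong_mult[OF u cong_refl[of d1]] by (simp add: cong_sym_eq)
  have c2: "[d2 = s1 * (v1 * [:-1, 1:] ^ r1) + s2 * [:-1, 1:] ^ r2] (mod xm1 m)"
    unfolding e2 using cong_mult[OF u cong_refl[of d2]] by (simp add: cong_sym_eq)
  show "d \<in> qc_code m ([:-1, 1:] ^ r1) (v1 * [:-1, 1:] ^ r1) (v2 * [:-1, 1:] ^ r2) ([:-1, 1:] ^ r2)"
    unfolding d' by (rule qc_memI[OF c1 c2])
qed




lemma dual_sub_D:
  fixes v1 v2 u :: "'a::field poly"
  assumes m: "m > 1" and LX: "[:-1, 1:] ^ m = (xm1 m :: 'a poly)"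
    and u: "[u * (1 - v1 * v2) = 1] (mod xm1 m)"
    and r: "r1 \<le> m" "r2 \<le> m"
  shows "euclid_dual (2 * m) (qc_code m ([:-1, 1:] ^ r1) (v1 * [:-1, 1:] ^ r1)
                            (v2 * [:-1, 1:] ^ r2) ([:-1, 1:] ^ r2))
    \<subseteq> qc_code m ([:-1, 1:] ^ (m - r1)) (- pconj m v2 * [:-1, 1:] ^ (m - r1))
                   (- pconj m v1 * [:-1, 1:] ^ (m - r2)) ([:-1, 1:] ^ (m - r2))"
proof
  have m0: "m > 0" using m by simp
  let ?L = "[:-1, 1:] :: 'a poly"
  fix v assume "v \<in> euclid_dual (2 * m) (qc_code m (?L ^ r1) (v1 * ?L ^ r1) (v2 * ?L ^ r2) (?L ^ r2))"
  then have len: "length v = 2 * m"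
    and hc: "\<And>c. c \<in> qc_code m (?L ^ r1) (v1 * ?L ^ r1) (v2 * ?L ^ r2) (?L ^ r2) \<Longrightarrow> euclid_ip c v = 0"
    unfolding euclid_dual_def by auto
  define b1 where "b1 = Poly (take m v)"
  define b2 where "b2 = Poly (drop m v)"
  have v: "v = cvec m b1 @ cvec m b2" unfolding b1_def b2_def by (rule split_vec[OF m0 len])
  define B1 where "B1 = cj m b1"
  define B2 where "B2 = cj m b2"
  have hip: "coeff (((s1 * ?L ^ r1 + s2 * (v2 * ?L ^ r2)) * B1 + (s1 * (v1 * ?L ^ r1) + s2 * ?L ^ r2) * B2) mod xm1 m) 0 = 0"
    for s1 s2
  proof -
    have "cvec m (s1 * ?L ^ r1 + s2 * (v2 * ?L ^ r2)) @ cvec m (s1 * (v1 * ?L ^ r1) + s2 * ?L ^ r2)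
        \<in> qc_code m (?L ^ r1) (v1 * ?L ^ r1) (v2 * ?L ^ r2) (?L ^ r2)"
      unfolding qc_code_def by blast
    from hc[OF this] show ?thesis
      unfolding v ip_app sdot_rdot[OF m0] rdot_def B1_def B2_def by (simp add: poly_mod_add_left)
  qed
  define P where "P = ?L ^ r1 * (B1 + v1 * B2)"
  define Q where "Q = ?L ^ r2 * (v2 * B1 + B2)"
  have Pm: "P mod xm1 m = 0"
  proof (rule mod_zeroI[OF m0])
    fix i
    have "P * cj m (monom 1 i) = (cj m (monom 1 i) * ?L ^ r1 + 0 * (v2 * ?L ^ r2)) * B1
        + (cj m (monom 1 i) * (v1 * ?L ^ r1) + 0 * ?L ^ r2) * B2"
      unfolding P_def by algebra
    note eq = this
    show "rdot m P (monom 1 i) = 0" unfolding rdot_def eq by (rule hip)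
  qed
  have Qm: "Q mod xm1 m = 0"
  proof (rule mod_zeroI[OF m0])
    fix i
    have "Q * cj m (monom 1 i) = (0 * ?L ^ r1 + cj m (monom 1 i) * (v2 * ?L ^ r2)) * B1
        + (0 * (v1 * ?L ^ r1) + cj m (monom 1 i) * ?L ^ r2) * B2"
      unfolding Q_def by algebra
    note eq = this
    show "rdot m Q (monom 1 i) = 0" unfolding rdot_def eq by (rule hip)
  qed
  have L0: "?L \<noteq> 0" by simp
  have "?L ^ r1 * ?L ^ (m - r1) dvd ?L ^ r1 * (B1 + v1 * B2)"
    using Pm LX r unfolding P_def by (simp flip: power_add add: dvd_eq_mod_eq_0)
  then have "?L ^ (m - r1) dvd (B1 + v1 * B2)" using L0 by simp
  then obtain \<alpha> where al: "B1 + v1 * B2 = ?L ^ (m - r1) * \<alpha>" by blast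
  have "?L ^ r2 * ?L ^ (m - r2) dvd ?L ^ r2 * (v2 * B1 + B2)"
    using Qm LX r unfolding Q_def by (simp flip: power_add add: dvd_eq_mod_eq_0)
  then have "?L ^ (m - r2) dvd (v2 * B1 + B2)" using L0 by simp
  then obtain \<beta> where be: "v2 * B1 + B2 = ?L ^ (m - r2) * \<beta>" by blast
  define q where "q = (- monom 1 (m - 1) :: 'a poly)"
  define R1 where "R1 = cj m u * q ^ (m - r1) * cj m \<alpha>"
  define R2 where "R2 = cj m u * q ^ (m - r2) * cj m \<beta>"
  have k1: "[cj m (?L ^ (m - r1)) = q ^ (m - r1) * ?L ^ (m - r1)] (mod xm1 m)"
    unfolding q_def by (rule cjL_pow[OF m0])
  have k2: "[cj m (?L ^ (m - r2)) = q ^ (m - r2) * ?L ^ (m - r2)] (mod xm1 m)"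
    unfolding q_def by (rule cjL_pow[OF m0])
  have pc1: "[cj m v1 = pconj m v1] (mod xm1 m)" using pconj_cj[OF m0] by (simp add: cong_sym_eq)
  have pc2: "[cj m v2 = pconj m v2] (mod xm1 m)" using pconj_cj[OF m0] by (simp add: cong_sym_eq)
  have eB1: "u * (?L ^ (m - r1) * \<alpha> - v1 * (?L ^ (m - r2) * \<beta>)) = (u * (1 - v1 * v2)) * B1"
    unfolding al[symmetric] be[symmetric] by algebra
  have cB1: "[B1 = u * (?L ^ (m - r1) * \<alpha> - v1 * (?L ^ (m - r2) * \<beta>))] (mod xm1 m)"
    unfolding eB1 using cong_mult[OF u cong_refl[of B1]] by (simp add: cong_sym_eq)
  have h1: "[b1 = cj m B1] (mod xm1 m)" unfolding B1_def using cj_cj[OF m, of b1] by (simp add: cong_def)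
  have h2: "[cj m B1 = cj m (u * (?L ^ (m - r1) * \<alpha> - v1 * (?L ^ (m - r2) * \<beta>)))] (mod xm1 m)"
    by (rule cg_cj[OF m0 cB1])
  have h3: "cj m (u * (?L ^ (m - r1) * \<alpha> - v1 * (?L ^ (m - r2) * \<beta>)))
     = cj m u * (cj m (?L ^ (m - r1)) * cj m \<alpha> - cj m v1 * (cj m (?L ^ (m - r2)) * cj m \<beta>))"
    by (simp only: cj_mult cj_diff)
  have h4: "[cj m u * (cj m (?L ^ (m - r1)) * cj m \<alpha> - cj m v1 * (cj m (?L ^ (m - r2)) * cj m \<beta>))
     = cj m u * ((q ^ (m - r1) * ?L ^ (m - r1)) * cj m \<alpha> - pconj m v1 * ((q ^ (m - r2) * ?L ^ (m - r2)) * cj m \<beta>))] (mod xm1 m)"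
    by (intro cong_mult cong_diff cong_refl k1 k2 pc1)
  have h5: "cj m u * ((q ^ (m - r1) * ?L ^ (m - r1)) * cj m \<alpha> - pconj m v1 * ((q ^ (m - r2) * ?L ^ (m - r2)) * cj m \<beta>))
     = R1 * ?L ^ (m - r1) + R2 * (- pconj m v1 * ?L ^ (m - r2))"
    unfolding R1_def R2_def by algebra
  have cb1: "[b1 = R1 * ?L ^ (m - r1) + R2 * (- pconj m v1 * ?L ^ (m - r2))] (mod xm1 m)"
    using cong_trans[OF cong_trans[OF h1 h2[unfolded h3]] h4[unfolded h5]] .
  have eB2: "u * (?L ^ (m - r2) * \<beta> - v2 * (?L ^ (m - r1) * \<alpha>)) = (u * (1 - v1 * v2)) * B2"
    unfolding al[symmetric] be[symmetric] by algebra
  have cB2: "[B2 = u * (?L ^ (m - r2) * \<beta> - v2 * (?L ^ (m - r1) * \<alpha>))] (mod xm1 m)"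
    unfolding eB2 using cong_mult[OF u cong_refl[of B2]] by (simp add: cong_sym_eq)
  have h1: "[b2 = cj m B2] (mod xm1 m)" unfolding B2_def using cj_cj[OF m, of b2] by (simp add: cong_def)
  have h2: "[cj m B2 = cj m (u * (?L ^ (m - r2) * \<beta> - v2 * (?L ^ (m - r1) * \<alpha>)))] (mod xm1 m)"
    by (rule cg_cj[OF m0 cB2])
  have h3: "cj m (u * (?L ^ (m - r2) * \<beta> - v2 * (?L ^ (m - r1) * \<alpha>)))
     = cj m u * (cj m (?L ^ (m - r2)) * cj m \<beta> - cj m v2 * (cj m (?L ^ (m - r1)) * cj m \<alpha>))"
    by (simp only: cj_mult cj_diff)
  have h4: "[cj m u * (cj m (?L ^ (m - r2)) * cj m \<beta> - cj m v2 * (cj m (?L ^ (m - r1)) * cj m \<alpha>))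
     = cj m u * ((q ^ (m - r2) * ?L ^ (m - r2)) * cj m \<beta> - pconj m v2 * ((q ^ (m - r1) * ?L ^ (m - r1)) * cj m \<alpha>))] (mod xm1 m)"
    by (intro cong_mult cong_diff cong_refl k1 k2 pc2)
  have h5: "cj m u * ((q ^ (m - r2) * ?L ^ (m - r2)) * cj m \<beta> - pconj m v2 * ((q ^ (m - r1) * ?L ^ (m - r1)) * cj m \<alpha>))
     = R1 * (- pconj m v2 * ?L ^ (m - r1)) + R2 * ?L ^ (m - r2)"
    unfolding R1_def R2_def by algebra
  have cb2: "[b2 = R1 * (- pconj m v2 * ?L ^ (m - r1)) + R2 * ?L ^ (m - r2)] (mod xm1 m)"
    using cong_trans[OF cong_trans[OF h1 h2[unfolded h3]] h4[unfolded h5]] .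
  show "v \<in> qc_code m (?L ^ (m - r1)) (- pconj m v2 * ?L ^ (m - r1)) (- pconj m v1 * ?L ^ (m - r2)) (?L ^ (m - r2))"
    unfolding v by (rule qc_memI[OF cb1 cb2])
qed




theorem mainTheorem14:
  fixes v1 v2 :: "'a::{field_gcd,finite} poly"
    and p t r1 r2 :: nat
  assumes "CHAR('a) = p"
    and "t \<ge> 1"
    and "gcd ((v1 * v2 - 1) mod xm1 (p ^ t)) (xm1 (p ^ t)) = 1"
    and "0 < r1" and "r1 < r2" and "real r2 < (real (p ^ t) - 1) / 2"
  shows "euclid_dual (2 * p ^ t)
           (qc_code (p ^ t) ([:-1, 1:] ^ r1) (v1 * [:-1, 1:] ^ r1)
                            (v2 * [:-1, 1:] ^ r2) ([:-1, 1:] ^ r2))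
         = qc_code (p ^ t) ([:-1, 1:] ^ (p ^ t - r1))
                           (- pconj (p ^ t) v2 * [:-1, 1:] ^ (p ^ t - r1))
                           (- pconj (p ^ t) v1 * [:-1, 1:] ^ (p ^ t - r2))
                           ([:-1, 1:] ^ (p ^ t - r2))
       \<and> euclid_dual (2 * p ^ t)
           (qc_code (p ^ t) ([:-1, 1:] ^ r1) (v1 * [:-1, 1:] ^ r1)
                            (v2 * [:-1, 1:] ^ r2) ([:-1, 1:] ^ r2))
         \<subseteq> qc_code (p ^ t) ([:-1, 1:] ^ r1) (v1 * [:-1, 1:] ^ r1)
                            (v2 * [:-1, 1:] ^ r2) ([:-1, 1:] ^ r2)"
proof -
  define m where "m = p ^ t"
  have fin: "finite (UNIV :: 'a set)" by simp
  have pr: "prime p" using assms(1) prime_CHAR_semidom finite_imp_CHAR_pos[OF fin] by metis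
  have m1: "m > 1" unfolding m_def using one_less_power[OF prime_gt_1_nat[OF pr], of t] assms(2) by simp
  have LX: "[:-1, 1:] ^ m = (xm1 m :: 'a poly)" by (rule L_pow[OF assms(1) m_def assms(2) fin])
  have "real (2 * r2 + 1) < real m" using assms(6) unfolding m_def by simp
  then have rb: "2 * r2 + 1 < m" by linarith
  define X where "X = (xm1 m :: 'a poly)"
  define g where "g = (v1 * v2 - 1) mod X"
  have "fst (bezout_coefficients g X) * g + snd (bezout_coefficients g X) * X = gcd g X"
    by (rule bezout_coefficients_fst_snd)
  also have "gcd g X = 1" using assms(3) unfolding g_def X_def m_def .
  finally obtain x y where xy: "x * g + y * X = 1" by blast
  have "[x * g + y * X = x * (v1 * v2 - 1) + 0] (mod X)"
    unfolding g_def by (intro cong_add cong_mult cong_refl) (simp_all add: cong_def)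
  then have "[x * (v1 * v2 - 1) = 1] (mod X)" using xy by (simp add: cong_sym_eq)
  moreover have "(-x) * (1 - v1 * v2) = x * (v1 * v2 - 1)" by (simp add: algebra_simps)
  ultimately have u: "[(-x) * (1 - v1 * v2) = 1] (mod xm1 m)" unfolding X_def by simp
  have main1: "euclid_dual (2 * m) (qc_code m ([:-1, 1:] ^ r1) (v1 * [:-1, 1:] ^ r1)
                            (v2 * [:-1, 1:] ^ r2) ([:-1, 1:] ^ r2))
    = qc_code m ([:-1, 1:] ^ (m - r1)) (- pconj m v2 * [:-1, 1:] ^ (m - r1))
                   (- pconj m v1 * [:-1, 1:] ^ (m - r2)) ([:-1, 1:] ^ (m - r2))"
    using dual_sub_D[OF m1 LX u] D_sub_dual[OF m1 LX] rb assms(5) by (intro equalityI) auto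
  have main2: "euclid_dual (2 * m) (qc_code m ([:-1, 1:] ^ r1) (v1 * [:-1, 1:] ^ r1)
                            (v2 * [:-1, 1:] ^ r2) ([:-1, 1:] ^ r2))
    \<subseteq> qc_code m ([:-1, 1:] ^ r1) (v1 * [:-1, 1:] ^ r1) (v2 * [:-1, 1:] ^ r2) ([:-1, 1:] ^ r2)"
    unfolding main1 using D_sub_C[OF m1 u] rb assms(5) by auto
  from main1 main2 show ?thesis unfolding m_def by blast
qed


end
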